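(* Multiplication (the ternary relation $w=xy$) is uniformly positive existentially definable: (1) over the language $\{0,1,+,R\}$ in the class $\mathcal{N}=\{\mathfrak{N}_p : p \text{ prime}\}$; (2) over the language $\{0,1,+,\mathrm{pos},R\}$ in the class $\mathcal{Z}=\{\mathfrak{Z}_p : p\text{ prime}\}$; (3) over the language $\{0,1,+,\mid,R,T\}$ in the class $\mathcal{D}=\{\mathfrak{D}_p : p\text{ prime}\}$. That is, in each case there is one positive existential formula $\mu(x,y,w)$ of the given language defining $w=xy$ in every structure of the class.
   Context: For a prime $p$, $x\mid_p y$ on $\mathbb{Z}$ means there exists $s\in\mathbb{Z}$ with $y=\pm x p^s$ (same symbol for its restriction to $\mathbb{N}$; $\mathbb{N}$ contains $0$). $\mathfrak{N}_p=(\mathbb{N};0,1,+,\mid_p)$ with $R$ interpreted as $\mid_p$. $\mathfrak{Z}_p=(\mathbb{Z};0,1,+,\mathrm{pos},\mid_p)$ where the unary relation $\mathrm{pos}(x)$ means $x\geq 0$ and $R$ is $\mid_p$. $\mathfrak{D}_p=(\mathbb{Z};0,1,+,\mid,\mid_p,\mathbb{Z}\smallsetminus\{-1,0,1\})$, where $\mid$ is ordinary divisibility, $R$ is $\mid_p$, and the unary predicate $T$ is interpreted as $\mathbb{Z}\smallsetminus\{-1,0,1\}$. *)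

theory Defs
  imports "HOL-Computational_Algebra.Primes"
begin

datatype tm = Var nat | Zero | One | Plus tm tm

datatype atom = Eq tm tm | RelR tm tm | Pos tm | Divides tm tm | PredT tm

datatype fm = Atom atom | Conj fm fm | Disj fm fm | Ex nat fm

datatype sym = SR | SPos | SDvd | ST

fun atom_syms :: "atom \<Rightarrow> sym set" where
  "atom_syms (Eq _ _) = {}"
| "atom_syms (RelR _ _) = {SR}"
| "atom_syms (Pos _) = {SPos}"
| "atom_syms (Divides _ _) = {SDvd}"
| "atom_syms (PredT _) = {ST}"

fun syms :: "fm \<Rightarrow> sym set" where
  "syms (Atom a) = atom_syms a"
| "syms (Conj f g) = syms f \<union> syms g"
| "syms (Disj f g) = syms f \<union> syms g"
| "syms (Ex _ f) = syms f"

fun eval_tm :: "(nat \<Rightarrow> 'a::{zero,one,plus}) \<Rightarrow> tm \<Rightarrow> 'a" where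
  "eval_tm e (Var n) = e n"
| "eval_tm e Zero = 0"
| "eval_tm e One = 1"
| "eval_tm e (Plus s t) = eval_tm e s + eval_tm e t"

text \<open>A structure is given by interpretations of R, pos, divisibility and T
  on a carrier type with 0, 1, +; the universe is the whole type.\<close>
fun sat_atom :: "('a \<Rightarrow> 'a \<Rightarrow> bool) \<Rightarrow> ('a \<Rightarrow> bool) \<Rightarrow> ('a \<Rightarrow> 'a \<Rightarrow> bool)
      \<Rightarrow> ('a \<Rightarrow> bool) \<Rightarrow> (nat \<Rightarrow> 'a::{zero,one,plus}) \<Rightarrow> atom \<Rightarrow> bool" where
  "sat_atom R P D T e (Eq s t) = (eval_tm e s = eval_tm e t)"
| "sat_atom R P D T e (RelR s t) = R (eval_tm e s) (eval_tm e t)"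
| "sat_atom R P D T e (Pos s) = P (eval_tm e s)"
| "sat_atom R P D T e (Divides s t) = D (eval_tm e s) (eval_tm e t)"
| "sat_atom R P D T e (PredT s) = T (eval_tm e s)"

fun sat :: "('a \<Rightarrow> 'a \<Rightarrow> bool) \<Rightarrow> ('a \<Rightarrow> bool) \<Rightarrow> ('a \<Rightarrow> 'a \<Rightarrow> bool)
      \<Rightarrow> ('a \<Rightarrow> bool) \<Rightarrow> (nat \<Rightarrow> 'a::{zero,one,plus}) \<Rightarrow> fm \<Rightarrow> bool" where
  "sat R P D T e (Atom a) = sat_atom R P D T e a"
| "sat R P D T e (Conj f g) = (sat R P D T e f \<and> sat R P D T e g)"
| "sat R P D T e (Disj f g) = (sat R P D T e f \<or> sat R P D T e g)"
| "sat R P D T e (Ex n f) = (\<exists>v. sat R P D T (e(n := v)) f)"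

text \<open>x |_p y iff y = +-x p^s for some integer s; for negative s this
  means x = +-y p^(-s).\<close>
definition pdvd :: "int \<Rightarrow> int \<Rightarrow> int \<Rightarrow> bool" where
  "pdvd p x y \<longleftrightarrow> (\<exists>k::nat. y = x * p ^ k \<or> y = - (x * p ^ k)
                             \<or> x = y * p ^ k \<or> x = - (y * p ^ k))"

definition pdvd_nat :: "nat \<Rightarrow> nat \<Rightarrow> nat \<Rightarrow> bool" where
  "pdvd_nat p x y \<longleftrightarrow> pdvd (int p) (int x) (int y)"

text \<open>Symbols not in the respective language are interpreted trivially; they
  never occur in formulas of that language.\<close>

definition sat_N :: "nat \<Rightarrow> (nat \<Rightarrow> nat) \<Rightarrow> fm \<Rightarrow> bool" where
  "sat_N p e f = sat (pdvd_nat p) (\<lambda>_. True) (\<lambda>_ _. True) (\<lambda>_. True) e f"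

definition sat_Z :: "nat \<Rightarrow> (nat \<Rightarrow> int) \<Rightarrow> fm \<Rightarrow> bool" where
  "sat_Z p e f = sat (pdvd (int p)) (\<lambda>x. x \<ge> 0) (\<lambda>_ _. True) (\<lambda>_. True) e f"

definition sat_D :: "nat \<Rightarrow> (nat \<Rightarrow> int) \<Rightarrow> fm \<Rightarrow> bool" where
  "sat_D p e f = sat (pdvd (int p)) (\<lambda>_. True) (\<lambda>x y. x dvd y)
                     (\<lambda>x. x \<notin> {-1, 0, 1}) e f"

end

theory Submission
  imports Defs "HOL-Number_Theory.Number_Theory"
begin


fun fvt :: "tm \<Rightarrow> nat set" where
  "fvt (Var n) = {n}" | "fvt Zero = {}" | "fvt One = {}" | "fvt (Plus s t) = fvt s \<union> fvt t"

lemma eval_cong: "(\<And>i. i \<in> fvt t \<Longrightarrow> e i = e' i) \<Longrightarrow> eval_tm e t = eval_tm e' t"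
  by (induct t) auto

lemma eval_upd[simp]: "n \<notin> fvt t \<Longrightarrow> eval_tm (e(n:=v)) t = eval_tm e t"
  by (rule eval_cong) auto

definition MN :: "tm \<Rightarrow> tm \<Rightarrow> tm \<Rightarrow> nat \<Rightarrow> fm" where
  "MN x z w d = Conj (Atom (RelR x w)) (Conj (Atom (RelR (Plus x One) (Plus w z)))
     (Conj (Atom (RelR (Plus (Plus x One) One) (Plus (Plus w z) z)))
       (Ex d (Atom (Eq w (Plus x (Var d)))))))"

lemma sat_MN: "d \<notin> fvt x \<Longrightarrow> d \<notin> fvt w \<Longrightarrow>
  sat R P D T e (MN x z w d) \<longleftrightarrow>
   (R (eval_tm e x) (eval_tm e w) \<and> R (eval_tm e x + 1) (eval_tm e w + eval_tm e z)
    \<and> R (eval_tm e x + 1 + 1) (eval_tm e w + eval_tm e z + eval_tm e z)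
    \<and> (\<exists>v. eval_tm e w = eval_tm e x + v))"
  by (simp add: MN_def)

lemma pdvd_nat_iff: "pdvd_nat p a b \<longleftrightarrow> (\<exists>k. b = a * p^k \<or> a = b * p^k)"
proof -
  have e: "\<And>x y::nat. (int x = - int y) \<longleftrightarrow> x = 0 \<and> y = 0" by arith
  show ?thesis
    unfolding pdvd_nat_def pdvd_def
    by (auto simp flip: of_nat_mult of_nat_power simp: e)
qed

lemma pow_nat_iff: "pdvd_nat p u 1 \<longleftrightarrow> (\<exists>k. u = p^k)"
  unfolding pdvd_nat_iff by (metis mult_1 mult_is_0 nat_mult_eq_1_iff power_0 zero_neq_one)

lemma Lnat:
  fixes p x a b k :: nat
  assumes p: "prime p" and x: "1 \<le> x" and eq: "x*p^a + p^k = (x+1)*p^b"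
  shows "a = k \<or> p dvd x"
proof -
  have p1: "1 < p" using p prime_gt_1_nat by auto
  consider "a = b" | "b < a" | "a < b" by linarith
  then show ?thesis
  proof cases
    case 1
    then have "p^k = p^b" using eq by (simp add: algebra_simps)
    then have "k = b" using p1 by simp
    then show ?thesis using 1 by simp
  next
    case 2
    have "p^b < p^a" using p1 2 by (simp add: power_strict_increasing)
    then have "x*p^b < x*p^a" using x by simp
    moreover have "x*p^a + p^k = x*p^b + p^b" using eq by (simp add: algebra_simps)
    ultimately have "p^k < p^b" by linarith
    then have kb: "k < b" using p1 power_less_imp_less_exp by blast
    have "p^b dvd x*p^a" using 2 by (simp add: le_imp_power_dvd)
    moreover have "p^b dvd (x+1)*p^b" by simp
    ultimately have "p^b dvd p^k" using eq by (metis dvd_add_right_iff)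
    then have "b \<le> k" using p1 power_dvd_imp_le by blast
    with kb show ?thesis by simp
  next
    case 3
    have "p^a dvd (x+1)*p^b" using 3 by (simp add: le_imp_power_dvd)
    then have "p^a dvd x*p^a + p^k" using eq by simp
    then have "p^a dvd p^k" by (simp add: dvd_add_right_iff)
    then have ak: "a \<le> k" using p1 power_dvd_imp_le by blast
    show ?thesis
    proof (cases "a = k")
      case True
      then have h: "(x+1)*p^a = (x+1)*p^b" using eq by (simp add: algebra_simps)
      have "p^a = p^b" using mult_left_cancel[of "x+1" "p^a" "p^b"] h by simp
      then have "a = b" using p1 by simp
      with 3 show ?thesis by simp
    next
      case False
      with ak have ak': "a < k" by simp
      have "p^a * (x + p^(k-a)) = p^a * ((x+1)*p^(b-a))"
        using eq ak' 3 by (simp add: algebra_simps flip: power_add)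
      then have e2: "x + p^(k-a) = (x+1)*p^(b-a)" using p1 by simp
      have "p dvd (x+1)*p^(b-a)" using 3 by (simp add: dvd_power)
      then have "p dvd x + p^(k-a)" using e2 by simp
      moreover have "p dvd p^(k-a)" using ak' by (simp add: dvd_power)
      ultimately show ?thesis by (simp add: dvd_add_left_iff)
    qed
  qed
qed

lemma pd_dir:
  assumes "pdvd_nat p a b" "1 \<le> a" "a \<le> b" "1 < p"
  shows "\<exists>e. b = a * p^e"
proof -
  obtain k where "b = a * p^k \<or> a = b * p^k" using assms(1) pdvd_nat_iff by auto
  then show ?thesis
  proof
    assume h: "a = b * p^k"
    have "1 \<le> p^k" using assms(4) by simp
    then have "b \<le> a" using h by (metis mult_le_mono2 nat_mult_1_right)
    then have "b = a * p^0" using assms(3) by simp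
    then show ?thesis by blast
  qed blast
qed

lemma MN_sound:
  assumes p: "prime p" and z: "z = p^k" and h0: "pdvd_nat p x w"
    and h1: "pdvd_nat p (x+1) (w+z)" and h2: "pdvd_nat p (x+1+1) (w+z+z)" and le: "x \<le> w"
  shows "w = x*z"
proof -
  have p1: "1 < p" using p prime_gt_1_nat by auto
  have z1: "1 \<le> z" using z p1 by simp
  show ?thesis
  proof (cases "x = 0")
    case True
    then show ?thesis using h0 p1 by (auto simp: pdvd_nat_iff)
  next
    case False
    then have x1: "1 \<le> x" by simp
    obtain a where a: "w = x*p^a" using pd_dir[OF h0 x1 le p1] by blast
    obtain b where b: "w + z = (x+1)*p^b" using pd_dir[OF h1 _ _ p1] le z1 by fastforce
    obtain g where g: "w + z + z = (x+1+1)*p^g" using pd_dir[OF h2 _ _ p1] le z1 by fastforce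
    have "a = k \<or> p dvd x" using Lnat[OF p x1, of a k b] a b z by simp
    moreover have "b = k \<or> p dvd (x+1)" using Lnat[OF p, of "x+1" b k g] b g z by simp
    moreover have "b = k \<Longrightarrow> a = k"
    proof -
      assume "b = k"
      then have "x*p^a = x*p^k" using a b z by (simp add: algebra_simps)
      then show "a = k" using x1 p1 by simp
    qed
    moreover have "\<not> (p dvd x \<and> p dvd (x+1))"
      using p by (metis dvd_add_right_iff nat_dvd_1_iff_1 not_prime_1)
    ultimately have "a = k" by blast
    then show ?thesis using a z by simp
  qed
qed

lemma MN_complete:
  assumes "z = p^k" "0 < p"
  shows "pdvd_nat p x (x*z) \<and> pdvd_nat p (x+1) (x*z+z) \<and> pdvd_nat p (x+1+1) (x*z+z+z) \<and> (\<exists>v. x*z = x + v)"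
proof -
  have "1 \<le> z" using assms by simp
  then have "x \<le> x*z" by simp
  then have "\<exists>v. x*z = x + v" by presburger
  moreover have "pdvd_nat p x (x*z) \<and> pdvd_nat p (x+1) (x*z+z) \<and> pdvd_nat p (x+1+1) (x*z+z+z)"
    unfolding pdvd_nat_iff assms(1)
    by (intro conjI exI[of _ k] disjI1; simp add: algebra_simps)
  ultimately show ?thesis by blast
qed

definition conjs :: "fm list \<Rightarrow> fm" where "conjs fs = foldr Conj fs (Atom (Eq Zero Zero))"
lemma sat_conjs[simp]: "sat R P D T e (conjs fs) \<longleftrightarrow> (\<forall>f\<in>set fs. sat R P D T e f)"
  by (induct fs) (auto simp: conjs_def)
lemma syms_conjs[simp]: "syms (conjs fs) = (\<Union>f\<in>set fs. syms f)"
  by (induct fs) (auto simp: conjs_def)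

lemma lt_neq[simp]: "x < b \<Longrightarrow> (x = b + k) \<longleftrightarrow> False" "x < b \<Longrightarrow> (b + k = x) \<longleftrightarrow> False"
  "x < (b::nat) \<Longrightarrow> (x = b) \<longleftrightarrow> False" "x < b \<Longrightarrow> (b = x) \<longleftrightarrow> False"
  by auto


definition bodyN :: "nat \<Rightarrow> nat \<Rightarrow> nat \<Rightarrow> nat \<Rightarrow> fm" where
 "bodyN x y w b = (let V = (\<lambda>i. Var (b+i)); u = V 0; a1 = V 1; z = V 2; W = V 3; R = V 4; U = V 5;
    t = V 6; Vv = V 7; Q = V 8; Qz = V 9; xW = V 10; V2 = V 11; s = V 12; c = V 13; d = b + 14;
    X = Var x; Y = Var y; Wt = Var w in
   conjs
     [Atom (RelR u One), Atom (Eq u (Plus (Plus (Plus (Plus X Y) One) One) a1)),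
      MN u u z d, Atom (RelR W One), MN R z U d, Atom (Eq (Plus U One) (Plus R W)),
      Atom (Eq R (Plus Y Vv)), MN t z (Plus Vv t) d, MN Q z Qz d, MN X W xW d,
      Atom (Eq (Plus Qz X) (Plus Q xW)), Atom (Eq Q (Plus Wt V2)), MN s z (Plus V2 s) d,
      Atom (Eq (Plus (Plus (Plus Wt One) One) c) z)])"

definition muN :: "fm" where
 "muN = Ex 3 (Ex 4 (Ex 5 (Ex 6 (Ex 7 (Ex 8 (Ex 9 (Ex 10 (Ex 11 (Ex 12
    (Ex 13 (Ex 14 (Ex 15 (Ex 16 (bodyN 0 1 2 3))))))))))))))"

definition MNp :: "nat \<Rightarrow> nat \<Rightarrow> nat \<Rightarrow> nat \<Rightarrow> bool" where
 "MNp p a z b \<longleftrightarrow> pdvd_nat p a b \<and> pdvd_nat p (a+1) (b+z) \<and> pdvd_nat p (a+1+1) (b+z+z) \<and> (\<exists>v. b = a + v)"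

definition BN :: "nat \<Rightarrow> nat \<Rightarrow> nat \<Rightarrow> nat \<Rightarrow> nat \<Rightarrow> nat \<Rightarrow> nat \<Rightarrow> nat \<Rightarrow> nat \<Rightarrow> nat \<Rightarrow> nat \<Rightarrow> nat \<Rightarrow> nat \<Rightarrow> nat \<Rightarrow> nat \<Rightarrow> nat \<Rightarrow> nat \<Rightarrow> nat \<Rightarrow> bool" where
 "BN p X Y Wv u a1 z W R U t V Q Qz xW V2 s c \<longleftrightarrow>
   pdvd_nat p u 1 \<and> u = X+Y+1+1+a1 \<and> MNp p u u z \<and> pdvd_nat p W 1 \<and> MNp p R z U \<and> U+1 = R+W
   \<and> R = Y+V \<and> MNp p t z (V+t) \<and> MNp p Q z Qz \<and> MNp p X W xW \<and> Qz+X = Q+xW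
   \<and> Q = Wv+V2 \<and> MNp p s z (V2+s) \<and> Wv+1+1+c = z"

lemma sat_bodyN: "sat_N p (e(3:=u, 4:=a1, 5:=z, 6:=W, 7:=R, 8:=U, 9:=t, 10:=V, 11:=Q, 12:=Qz, 13:=xW, 14:=V2, 15:=s, 16:=c)) (bodyN 0 1 2 3)
   \<longleftrightarrow> BN p (e 0) (e 1) (e 2) u a1 z W R U t V Q Qz xW V2 s c"
  unfolding sat_N_def bodyN_def BN_def MNp_def Let_def
  by (simp add: sat_MN)

lemma sat_muN: "sat_N p e muN \<longleftrightarrow> (\<exists>u a1 z W R U t V Q Qz xW V2 s c. BN p (e 0) (e 1) (e 2) u a1 z W R U t V Q Qz xW V2 s c)"
  unfolding muN_def sat_N_def by (simp only: sat.simps sat_bodyN[unfolded sat_N_def])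

lemma syms_MN: "syms (MN x z w d) = {SR}"
  by (simp add: MN_def)

lemma syms_muN: "syms muN \<subseteq> {SR}"
  unfolding muN_def bodyN_def Let_def by (simp only: syms.simps syms_conjs syms_MN atom_syms.simps list.set) (auto simp: syms_MN)


lemma MNp_iff: "prime p \<Longrightarrow> z = p^k \<Longrightarrow> MNp p a z b \<longleftrightarrow> b = a*z"
proof
  assume p: "prime p" and z: "z = p^k" and h: "MNp p a z b"
  then show "b = a*z" unfolding MNp_def using MN_sound[OF p z] by auto
next
  assume p: "prime p" and z: "z = p^k" and h: "b = a*z"
  then have "0 < p" using prime_gt_0_nat by blast
  then show "MNp p a z b" unfolding MNp_def h using MN_complete[OF z] by blast
qed

lemma small_mult: fixes a k m :: int
  assumes "a = k*m" "0 < m" "-m < a" "a < m" shows "a = 0"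
proof (cases "k = 0")
  case False
  then consider "k \<ge> 1" | "k \<le> -1" by linarith
  then show ?thesis
  proof cases
    case 1 then have "m \<le> k*m" using assms(2) by (simp add: mult_le_cancel_right1)
    then show ?thesis using assms by linarith
  next
    case 2 then have "k*m \<le> -m" using assms(2)
      by (metis mult_minus_left mult_right_mono less_le_not_le mult_cancel_right1 nle_le)
    then show ?thesis using assms by linarith
  qed
qed (use assms in simp)

lemma core_int: fixes z R W Q X Y V t Wv Vb s :: int
  assumes z: "2 \<le> z" and h1: "R*z + 1 = R + W" and h2: "Q*z + X = Q + X*W"
    and h3: "R = Y + V" and h4: "V + t = t*z" and h5: "Q = Wv + Vb" and h6: "Vb + s = s*z"
    and b1: "0 \<le> Wv" "Wv + 2 \<le> z" and b2: "0 \<le> X*Y" "X*Y + 2 \<le> z"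
  shows "Wv = X*Y"
proof -
  have "(z - 1)*(Q - X*R) = (Q*z + X) - X*(R*z + 1) - Q + X*R" by (simp add: algebra_simps)
  also have "\<dots> = (Q + X*W) - X*(R + W) - Q + X*R" using h1 h2 by simp
  also have "\<dots> = 0" by (simp add: algebra_simps)
  finally have "Q = X*R" using z by simp
  moreover have "V = t*(z-1)" using h4 by (simp add: algebra_simps)
  moreover have "Vb = s*(z-1)" using h6 by (simp add: algebra_simps)
  ultimately have "Wv - X*Y = (X*t - s)*(z-1)" using h3 h5 by (simp add: algebra_simps)
  then have "Wv - X*Y = 0" by (rule small_mult) (use z b1 b2 in linarith)+
  then show ?thesis by simp
qed

lemma XY_bound: fixes X Y u :: nat assumes "X + Y + 2 \<le> u" shows "X*Y + 2 \<le> u*u"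
proof -
  have "X*Y \<le> (X+Y+2)*(X+Y)" by (intro mult_le_mono) auto
  then have "X*Y + 2 \<le> (X+Y+2)*(X+Y+2)" by (simp add: algebra_simps)
  also have "\<dots> \<le> u*u" using assms by (intro mult_le_mono) auto
  finally show ?thesis .
qed

lemma BN_sound:
  assumes p: "prime p" and h: "BN p X Y Wv u a1 z W R U t V Q Qz xW V2 s c"
  shows "Wv = X*Y"
proof -
  have p1: "1 < p" using p prime_gt_1_nat by auto
  from h have hu: "pdvd_nat p u 1" and hu2: "u = X+Y+1+1+a1" and hz: "MNp p u u z" and hW: "pdvd_nat p W 1"
    and hR: "MNp p R z U" and e1: "U+1 = R+W" and e2: "R = Y+V" and ht: "MNp p t z (V+t)"
    and hQ: "MNp p Q z Qz" and hX: "MNp p X W xW" and e3: "Qz+X = Q+xW" and e4: "Q = Wv+V2"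
    and hs: "MNp p s z (V2+s)" and e5: "Wv+1+1+c = z" unfolding BN_def by blast+
  obtain j where uj: "u = p^j" using hu pow_nat_iff by blast
  have zu: "z = u*u" using MNp_iff[OF p uj] hz by simp
  have zp: "z = p^(j+j)" using zu uj by (simp add: power_add)
  obtain m where Wm: "W = p^m" using hW pow_nat_iff by blast
  have f1: "U = R*z" using MNp_iff[OF p zp] hR by simp
  have f2: "V+t = t*z" using MNp_iff[OF p zp] ht by simp
  have f3: "Qz = Q*z" using MNp_iff[OF p zp] hQ by simp
  have f4: "xW = X*W" using MNp_iff[OF p Wm] hX by simp
  have f5: "V2+s = s*z" using MNp_iff[OF p zp] hs by simp
  have ub: "X*Y + 2 \<le> z" using XY_bound[of X Y u] hu2 zu by simp
  have u2: "2 \<le> u" using hu2 by simp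
  have "2 \<le> z" using zu u2 by (metis le_trans mult_le_mono nat_le_linear mult_2 le_add1 ub)
  then have z2: "2 \<le> int z" by simp
  have n1: "R*z + 1 = R + W" using e1 f1 by simp
  have i1: "int R * int z + 1 = int R + int W" using arg_cong[OF n1, of int] by simp
  have n2: "Q*z + X = Q + X*W" using e3 f3 f4 by simp
  have i2: "int Q * int z + int X = int Q + int X * int W" using arg_cong[OF n2, of int] by simp
  have i3: "int R = int Y + int V" using arg_cong[OF e2, of int] by simp
  have i4: "int V + int t = int t * int z" using arg_cong[OF f2, of int] by simp
  have i5: "int Q = int Wv + int V2" using arg_cong[OF e4, of int] by simp
  have i6: "int V2 + int s = int s * int z" using arg_cong[OF f5, of int] by simp
  have b1: "int Wv + 2 \<le> int z" using e5 by linarith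
  have b2: "int X * int Y + 2 \<le> int z" using ub by (metis of_nat_add of_nat_le_iff of_nat_mult of_nat_numeral)
  have "int Wv = int X * int Y"
    by (rule core_int[OF z2 i1 i2 i3 i4 i5 i6 _ b1 _ b2]) simp_all
  then show ?thesis by (simp flip: of_nat_mult)
qed

lemma BN_complete:
  assumes p: "prime p"
  shows "\<exists>u a1 z W R U t V Q Qz xW V2 s c. BN p X Y (X*Y) u a1 z W R U t V Q Qz xW V2 s c"
proof -
  have p1: "1 < p" using p prime_gt_1_nat by auto
  define j where "j = X+Y+2"
  have "j < 2^j" by simp
  also have "(2::nat)^j \<le> p^j" using p1 by (intro power_mono) auto
  finally have j: "X+Y+2 \<le> p^j" unfolding j_def by simp
  define u where "u = p^j"
  define z where "z = u*u"
  have zp: "z = p^(j+j)" unfolding z_def u_def by (simp add: power_add)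
  have ub: "X*Y + 2 \<le> z" unfolding z_def using XY_bound j u_def by simp
  then have z1: "1 \<le> z" by simp
  define W where "W = z^Y"
  have Wp: "W = p^((j+j)*Y)" unfolding W_def zp by (simp add: power_mult)
  define R where "R = (\<Sum>i<Y. z^i)"
  have gR: "int R * (int z - 1) = int W - 1"
    unfolding R_def W_def using power_diff_1_eq[of "int z" Y] by (simp add: mult.commute)
  have RY: "Y \<le> R"
  proof -
    have "(\<Sum>i<Y. (1::nat)) \<le> (\<Sum>i<Y. z^i)" using z1 by (intro sum_mono) simp
    then show ?thesis unfolding R_def by simp
  qed
  have "(int z - 1) dvd (int R - int Y)"
  proof -
    have "int R - int Y = (\<Sum>i<Y. (int z ^ i - 1))" unfolding R_def by (simp add: sum_subtractf)
    moreover have "\<forall>i. (int z - 1) dvd (int z ^ i - 1)"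
    proof
      fix i show "(int z - 1) dvd (int z ^ i - 1)" unfolding power_diff_1_eq[of "int z" i] by simp
    qed
    ultimately show ?thesis by (simp add: dvd_sum)
  qed
  then have "int (z - 1) dvd int (R - Y)" using RY z1 by (simp add: of_nat_diff)
  then have "(z - 1) dvd (R - Y)" by simp
  then obtain t where t: "R - Y = (z - 1)*t" by (rule dvdE)
  define V where "V = R - Y"
  have Vt: "V + t = t*z" unfolding V_def t using z1 by (simp add: algebra_simps)
  have e1: "R*z + 1 = R + W"
  proof -
    have "int (R*z + 1) = int (R + W)" using gR by (simp add: algebra_simps)
    then show ?thesis by (simp only: of_nat_eq_iff)
  qed
  have e3: "X*R*z + X = X*R + X*W" using arg_cong[OF e1, of "\<lambda>n. X*n"] by (simp add: algebra_simps)
  have e4: "X*R = X*Y + X*V" unfolding V_def using RY by (simp add: diff_mult_distrib2)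
  have e5: "X*V + X*t = (X*t)*z" using arg_cong[OF Vt, of "\<lambda>n. X*n"] by (simp add: algebra_simps)
  have "BN p X Y (X*Y) u (u - (X+Y+2)) z W R (R*z) t V (X*R) (X*R*z) (X*W) (X*V) (X*t) (z - (X*Y+2))"
    unfolding BN_def
  proof (intro conjI)
    show "pdvd_nat p u 1" using pow_nat_iff u_def by blast
    show "u = X+Y+1+1+(u - (X+Y+2))" using j u_def by simp
    show "MNp p u u z" using MNp_iff[OF p u_def] z_def by simp
    show "pdvd_nat p W 1" using pow_nat_iff Wp by blast
    show "MNp p R z (R*z)" using MNp_iff[OF p zp] by simp
    show "R*z + 1 = R + W" by (rule e1)
    show "R = Y + V" using V_def RY by simp
    show "MNp p t z (V+t)" using MNp_iff[OF p zp] Vt by simp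
    show "MNp p (X*R) z (X*R*z)" using MNp_iff[OF p zp] by simp
    show "MNp p X W (X*W)" using MNp_iff[OF p Wp] by simp
    show "X*R*z + X = X*R + X*W" by (rule e3)
    show "X*R = X*Y + X*V" by (rule e4)
    show "MNp p (X*t) z (X*V + X*t)" using MNp_iff[OF p zp] e5 by simp
    show "X*Y+1+1+(z - (X*Y+2)) = z" using ub by simp
  qed
  then show ?thesis by blast
qed


lemma sat_N_muN: assumes p: "prime p" shows "sat_N p e muN \<longleftrightarrow> e 2 = e 0 * e 1"
proof
  assume "sat_N p e muN"
  then obtain u a1 z W R U t V Q Qz xW V2 s c where "BN p (e 0) (e 1) (e 2) u a1 z W R U t V Q Qz xW V2 s c"
    unfolding sat_muN by blast
  then show "e 2 = e 0 * e 1" by (rule BN_sound[OF p])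
next
  assume eq: "e 2 = e 0 * e 1"
  obtain u a1 z W R U t V Q Qz xW V2 s c where bn: "BN p (e 0) (e 1) (e 0 * e 1) u a1 z W R U t V Q Qz xW V2 s c"
    using BN_complete[OF p, of "e 0" "e 1"] by (elim exE) blast
  show "sat_N p e muN" unfolding sat_muN eq apply (intro exI) by (rule bn)
qed

fun fva :: "atom \<Rightarrow> nat set" where
  "fva (Eq s t) = fvt s \<union> fvt t" | "fva (RelR s t) = fvt s \<union> fvt t" | "fva (Pos s) = fvt s"
| "fva (Divides s t) = fvt s \<union> fvt t" | "fva (PredT s) = fvt s"

fun fv :: "fm \<Rightarrow> nat set" where
  "fv (Atom a) = fva a" | "fv (Conj f g) = fv f \<union> fv g" | "fv (Disj f g) = fv f \<union> fv g"
| "fv (Ex n f) = fv f - {n}"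

fun relZ :: "fm \<Rightarrow> fm" where
  "relZ (Atom a) = Atom a" | "relZ (Conj f g) = Conj (relZ f) (relZ g)"
| "relZ (Disj f g) = Disj (relZ f) (relZ g)"
| "relZ (Ex n f) = Ex n (Conj (Atom (Pos (Var n))) (relZ f))"

lemma syms_relZ: "syms (relZ f) \<subseteq> syms f \<union> {SPos}"
  by (induct f) auto

lemma eval_nat: "(\<forall>i\<in>fvt t. 0 \<le> e i) \<Longrightarrow> eval_tm e t = int (eval_tm (\<lambda>i. nat (e i)) t)"
  by (induct t) auto

lemma sat_Z_simps:
  "sat_Z p e (Atom a) = sat_atom (pdvd (int p)) (\<lambda>x. x \<ge> 0) (\<lambda>_ _. True) (\<lambda>_. True) e a"
  "sat_Z p e (Conj f g) = (sat_Z p e f \<and> sat_Z p e g)"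
  "sat_Z p e (Disj f g) = (sat_Z p e f \<or> sat_Z p e g)"
  "sat_Z p e (Ex n f) = (\<exists>v. sat_Z p (e(n:=v)) f)"
  by (simp_all add: sat_Z_def)

lemma sat_N_simps:
  "sat_N p e (Atom a) = sat_atom (pdvd_nat p) (\<lambda>_. True) (\<lambda>_ _. True) (\<lambda>_. True) e a"
  "sat_N p e (Conj f g) = (sat_N p e f \<and> sat_N p e g)"
  "sat_N p e (Disj f g) = (sat_N p e f \<or> sat_N p e g)"
  "sat_N p e (Ex n f) = (\<exists>v. sat_N p (e(n:=v)) f)"
  by (simp_all add: sat_N_def)

lemma sat_relZ: "(\<forall>i\<in>fv f. 0 \<le> e i) \<Longrightarrow> sat_Z p e (relZ f) \<longleftrightarrow> sat_N p (\<lambda>i. nat (e i)) f"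
proof (induct f arbitrary: e)
  case (Atom a)
  then show ?case
    by (cases a) (auto simp: sat_Z_simps sat_N_simps pdvd_nat_def eval_nat[of _ e])
next
  case (Conj f g) then show ?case by (simp add: sat_Z_simps sat_N_simps)
next
  case (Disj f g) then show ?case by (simp add: sat_Z_simps sat_N_simps)
next
  case (Ex n f)
  have "sat_Z p e (relZ (Ex n f)) \<longleftrightarrow> (\<exists>v. 0 \<le> v \<and> sat_Z p (e(n:=v)) (relZ f))"
    by (simp add: sat_Z_simps)
  also have "\<dots> \<longleftrightarrow> (\<exists>v. 0 \<le> v \<and> sat_N p ((\<lambda>i. nat (e i))(n := nat v)) f)"
  proof -
    have "\<And>v. 0 \<le> v \<Longrightarrow> sat_Z p (e(n:=v)) (relZ f) \<longleftrightarrow> sat_N p ((\<lambda>i. nat (e i))(n := nat v)) f"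
    proof -
      fix v :: int assume v: "0 \<le> v"
      have "\<forall>i\<in>fv f. 0 \<le> (e(n:=v)) i" using Ex.prems v by auto
      then have "sat_Z p (e(n:=v)) (relZ f) \<longleftrightarrow> sat_N p (\<lambda>i. nat ((e(n:=v)) i)) f" by (rule Ex.hyps)
      moreover have "(\<lambda>i. nat ((e(n:=v)) i)) = (\<lambda>i. nat (e i))(n := nat v)" by auto
      ultimately show "sat_Z p (e(n:=v)) (relZ f) \<longleftrightarrow> sat_N p ((\<lambda>i. nat (e i))(n := nat v)) f" by simp
    qed
    then show ?thesis by blast
  qed
  also have "\<dots> \<longleftrightarrow> (\<exists>u. sat_N p ((\<lambda>i. nat (e i))(n := u)) f)"
    by (metis nat_int of_nat_0_le_iff)
  also have "\<dots> \<longleftrightarrow> sat_N p (\<lambda>i. nat (e i)) (Ex n f)" by (simp add: sat_N_simps)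
  finally show ?case .
qed

lemma fv_MN: "fv (MN x z w d) = fvt x \<union> fvt z \<union> fvt w \<union> (fvt w \<union> fvt x - {d})"
  by (auto simp: MN_def)

lemma fv_conjs: "fv (conjs fs) = (\<Union>f\<in>set fs. fv f)"
  by (induct fs) (auto simp: conjs_def)

lemma fv_muN: "fv muN \<subseteq> {0,1,2}"
  unfolding muN_def bodyN_def Let_def
  by (simp only: fv.simps fv_conjs fv_MN fva.simps fvt.simps list.set) (auto simp: fv_MN)

lemma relmu: assumes p: "prime p" and h: "0 \<le> e 0" "0 \<le> e 1" "0 \<le> e 2"
  shows "sat_Z p e (relZ muN) \<longleftrightarrow> e 2 = e 0 * e 1"
proof -
  have "\<forall>i\<in>fv muN. 0 \<le> e i" using fv_muN h by auto
  then have "sat_Z p e (relZ muN) \<longleftrightarrow> sat_N p (\<lambda>i. nat (e i)) muN" by (rule sat_relZ)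
  also have "\<dots> \<longleftrightarrow> nat (e 2) = nat (e 0) * nat (e 1)" using sat_N_muN[OF p] by simp
  also have "\<dots> \<longleftrightarrow> e 2 = e 0 * e 1" using h by (metis nat_eq_iff2 nat_mult_distrib zero_le_mult_iff int_nat_eq)
  finally show ?thesis .
qed

definition SG :: "int \<Rightarrow> int \<Rightarrow> int \<Rightarrow> int \<Rightarrow> int \<Rightarrow> int \<Rightarrow> bool" where
  "SG x y w a c m \<longleftrightarrow> (x = a \<and> y = c \<and> w = m) \<or> (x + a = 0 \<and> y = c \<and> w + m = 0)
     \<or> (x = a \<and> y + c = 0 \<and> w + m = 0) \<or> (x + a = 0 \<and> y + c = 0 \<and> w = m)"

definition signZ :: fm where
  "signZ = (let X = Var 3; Y = Var 4; W = Var 5; a = Var 0; c = Var 1; m = Var 2 in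
     Disj (conjs [Atom (Eq X a), Atom (Eq Y c), Atom (Eq W m)])
     (Disj (conjs [Atom (Eq (Plus X a) Zero), Atom (Eq Y c), Atom (Eq (Plus W m) Zero)])
     (Disj (conjs [Atom (Eq X a), Atom (Eq (Plus Y c) Zero), Atom (Eq (Plus W m) Zero)])
       (conjs [Atom (Eq (Plus X a) Zero), Atom (Eq (Plus Y c) Zero), Atom (Eq W m)]))))"

definition muZ :: fm where
  "muZ = Ex 3 (Ex 4 (Ex 5 (conjs [Atom (Eq (Var 3) (Var 0)), Atom (Eq (Var 4) (Var 1)), Atom (Eq (Var 5) (Var 2)),
     Ex 0 (Ex 1 (Ex 2 (conjs [Atom (Pos (Var 0)), Atom (Pos (Var 1)), Atom (Pos (Var 2)), signZ, relZ muN])))])))"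

lemma sat_signZ: "sat_Z p e signZ \<longleftrightarrow> SG (e 3) (e 4) (e 5) (e 0) (e 1) (e 2)"
  by (simp add: signZ_def SG_def sat_Z_def Let_def)

lemma sat_Z_conjs: "sat_Z p e (conjs fs) \<longleftrightarrow> (\<forall>f\<in>set fs. sat_Z p e f)"
  by (simp add: sat_Z_def)

lemma sat_muZ: assumes p: "prime p"
  shows "sat_Z p e muZ \<longleftrightarrow> (\<exists>a c m. 0 \<le> a \<and> 0 \<le> c \<and> 0 \<le> m \<and> SG (e 0) (e 1) (e 2) a c m \<and> m = a*c)"
proof -
  have "sat_Z p e muZ \<longleftrightarrow> (\<exists>a c m. 0 \<le> a \<and> 0 \<le> c \<and> 0 \<le> m \<and> SG (e 0) (e 1) (e 2) a c m \<and>
     sat_Z p (e(3:=e 0, 4:=e 1, 5:=e 2, 0:=a, 1:=c, 2:=m)) (relZ muN))"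
    unfolding muZ_def by (simp add: sat_Z_simps sat_Z_conjs sat_signZ del: relZ.simps)
  also have "\<dots> \<longleftrightarrow> (\<exists>a c m. 0 \<le> a \<and> 0 \<le> c \<and> 0 \<le> m \<and> SG (e 0) (e 1) (e 2) a c m \<and> m = a*c)"
    using relmu[OF p] by (intro ex_cong1 conj_cong refl) auto
  finally show ?thesis .
qed

lemma muZ_correct: assumes p: "prime p" shows "sat_Z p e muZ \<longleftrightarrow> e 2 = e 0 * e 1"
  unfolding sat_muZ[OF p]
proof
  assume "\<exists>a c m. 0 \<le> a \<and> 0 \<le> c \<and> 0 \<le> m \<and> SG (e 0) (e 1) (e 2) a c m \<and> m = a*c"
  then obtain a c m where "SG (e 0) (e 1) (e 2) a c m" "m = a*c" by blast
  then show "e 2 = e 0 * e 1" unfolding SG_def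
    by (auto simp: algebra_simps eq_neg_iff_add_eq_0[symmetric] minus_equation_iff)
next
  assume h: "e 2 = e 0 * e 1"
  show "\<exists>a c m. 0 \<le> a \<and> 0 \<le> c \<and> 0 \<le> m \<and> SG (e 0) (e 1) (e 2) a c m \<and> m = a*c"
    apply (rule exI[of _ "\<bar>e 0\<bar>"], rule exI[of _ "\<bar>e 1\<bar>"], rule exI[of _ "\<bar>e 0\<bar> * \<bar>e 1\<bar>"])
    using h by (auto simp: SG_def abs_if algebra_simps)
qed

lemma syms_muZ: "syms muZ \<subseteq> {SPos, SR}"
proof -
  have "syms (relZ muN) \<subseteq> {SPos, SR}" using syms_relZ[of muN] syms_muN by auto
  then show ?thesis unfolding muZ_def signZ_def Let_def by auto
qed


definition isU :: "nat \<Rightarrow> int \<Rightarrow> bool" where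
  "isU p u \<longleftrightarrow> (\<exists>e. u = int p^e \<or> u = - (int p^e))"

lemma isU_pdvd: assumes p: "prime p" shows "pdvd (int p) u 1 \<longleftrightarrow> isU p u"
proof
  have p1: "1 < int p" using p prime_gt_1_nat by auto
  assume "pdvd (int p) u 1"
  then obtain k where h: "1 = u * int p ^ k \<or> 1 = - (u * int p ^ k) \<or> u = 1 * int p ^ k \<or> u = - (1 * int p ^ k)"
    unfolding pdvd_def by blast
  show "isU p u"
  proof (cases "u = int p ^ k \<or> u = - (int p ^ k)")
    case True then show ?thesis unfolding isU_def by blast
  next
    case False
    with h have "u * int p ^ k = 1 \<or> (-u) * int p ^ k = 1" by auto
    then have "int p ^ k dvd 1" by (metis dvd_triv_right)
    then have "int p ^ k \<le> 1" by (simp add: zdvd_imp_le)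
    moreover have "1 \<le> int p ^ k" using p1 by simp
    ultimately have "int p ^ k = 1" by simp
    then have "u = int p ^ 0 \<or> u = - (int p ^ 0)" using h by auto
    then show ?thesis unfolding isU_def by blast
  qed
next
  assume "isU p u"
  then obtain e where "u = int p^e \<or> u = - (int p^e)" unfolding isU_def by blast
  then show "pdvd (int p) u 1" unfolding pdvd_def by auto
qed

lemma isU_mult: "isU p a \<Longrightarrow> isU p b \<Longrightarrow> isU p (a*b)"
  unfolding isU_def by (auto simp: power_add) (metis power_add minus_mult_minus mult_minus_left mult_minus_right)+

lemma isU_neq0: "prime p \<Longrightarrow> isU p a \<Longrightarrow> a \<noteq> 0"
  unfolding isU_def using prime_gt_0_nat by fastforce

lemma isU_abs: "isU p a \<Longrightarrow> \<exists>e. \<bar>a\<bar> = int p ^ e"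
  unfolding isU_def by auto

lemma unit_quot:
  assumes p: "prime p" and n: "n \<noteq> 0" and d: "n dvd m" and pd: "pdvd (int p) n m"
  shows "\<exists>r. isU p r \<and> m = r * n"
proof -
  obtain k where h: "m = n * int p ^ k \<or> m = - (n * int p ^ k) \<or> n = m * int p ^ k \<or> n = - (m * int p ^ k)"
    using pd unfolding pdvd_def by blast
  show ?thesis
  proof (cases "m = n * int p ^ k \<or> m = - (n * int p ^ k)")
    case True
    then show ?thesis unfolding isU_def by (metis mult.commute mult_minus_left)
  next
    case False
    with h have h2: "n = m * int p ^ k \<or> n = - (m * int p ^ k)" by auto
    obtain q where q: "m = n * q" using d by blast
    from h2 have "n = n * (q * int p ^ k) \<or> n = n * (- (q * int p ^ k))" using q by (auto simp: algebra_simps)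
    then have "q * int p ^ k = 1 \<or> (-q) * int p ^ k = 1" using n
      by (metis mult_cancel_left1 mult_minus_left)
    then have "int p ^ k dvd 1" by (metis dvd_triv_right)
    then have "int p ^ k \<le> 1" by (simp add: zdvd_imp_le)
    moreover have "1 \<le> int p" using prime_gt_0_nat[OF p] by simp
    then have "1 \<le> int p ^ k" by simp
    ultimately have "int p ^ k = 1" by simp
    then have "m = n \<or> m = - n" using h2 by auto
    then show ?thesis unfolding isU_def by (metis mult_1 mult_minus_left power_0)
  qed
qed

lemma unit_coprime:
  assumes p: "prime p" and z: "isU p z" and r: "isU p r" and d: "z dvd r * n" and np: "\<not> int p dvd n"
  shows "\<exists>t. isU p t \<and> r = z * t"
proof -
  obtain k where zk: "z = int p^k \<or> z = - (int p^k)" using z unfolding isU_def by blast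
  obtain e where re: "r = int p^e \<or> r = - (int p^e)" using r unfolding isU_def by blast
  have "int p ^ k dvd int p ^ e * n" using d zk re by auto
  moreover have "coprime (int p ^ k) n"
  proof -
    have "prime (int p)" using p by simp
    then have "coprime (int p) n" using np by (rule prime_imp_coprime)
    then show ?thesis by simp
  qed
  ultimately have "int p ^ k dvd int p ^ e" using coprime_dvd_mult_left_iff by blast
  then have ke: "k \<le> e" using p prime_gt_1_nat
    by (metis of_nat_power power_dvd_imp_le int_dvd_int_iff)
  then have "int p ^ e = int p ^ k * int p ^ (e - k)" by (simp flip: power_add)
  then show ?thesis using zk re unfolding isU_def
    by (metis mult_minus_left mult_minus_right minus_minus)
qed

lemma set_lemma:
  assumes p: "prime p" and t: "isU p t" and t': "isU p t'" and ne: "t \<noteq> t'"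
  shows "\<bar>t' - 1\<bar> \<le> 3 * \<bar>t - t'\<bar>"
proof -
  obtain a where ta: "t = int p^a \<or> t = - (int p^a)" using t unfolding isU_def by blast
  obtain b where tb: "t' = int p^b \<or> t' = - (int p^b)" using t' unfolding isU_def by blast
  have p2: "2 \<le> int p" using p prime_ge_2_nat by auto
  have P: "1 \<le> int p ^ a" "1 \<le> int p ^ b" using p2 by simp_all
  have ab: "a < b \<Longrightarrow> 2 * int p ^ a \<le> int p ^ b"
  proof -
    assume "a < b"
    then have "int p ^ b = int p ^ a * int p ^ (b - a)" by (simp flip: power_add)
    moreover have "int p \<le> int p ^ (b - a)" using \<open>a < b\<close> p2 by (intro self_le_power) auto
    moreover have "int p ^ a * 2 \<le> int p ^ a * int p" using P p2 by (intro mult_left_mono) auto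
    moreover have "int p ^ a * int p \<le> int p ^ a * int p ^ (b - a)" using P calculation(2) by (intro mult_left_mono) auto
    ultimately show ?thesis by linarith
  qed
  have ba: "b < a \<Longrightarrow> 2 * int p ^ b \<le> int p ^ a"
  proof -
    assume "b < a"
    then have "int p ^ a = int p ^ b * int p ^ (a - b)" by (simp flip: power_add)
    moreover have "int p \<le> int p ^ (a - b)" using \<open>b < a\<close> p2 by (intro self_le_power) auto
    moreover have "int p ^ b * 2 \<le> int p ^ b * int p" using P p2 by (intro mult_left_mono) auto
    moreover have "int p ^ b * int p \<le> int p ^ b * int p ^ (a - b)" using P calculation(2) by (intro mult_left_mono) auto
    ultimately show ?thesis by linarith
  qed
  consider "a < b" | "a = b" | "b < a" by linarith
  then show ?thesis
  proof cases
    case 1 then show ?thesis using ta tb P ab[OF 1] by (elim disjE) (simp_all add: abs_if; linarith)+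
  next
    case 2 then show ?thesis using ta tb P ne by (elim disjE) (simp_all add: abs_if; linarith)+
  next
    case 3 then show ?thesis using ta tb P ba[OF 3] by (elim disjE) (simp_all add: abs_if; linarith)+
  qed
qed

lemma two_coprime:
  assumes p: "prime p"
  shows "\<exists>i i'::int. 0 \<le> i \<and> i < i' \<and> i' \<le> 3 \<and> \<not> int p dvd x + i \<and> \<not> int p dvd x + i'"
proof -
  have p2: "2 \<le> int p" using p prime_ge_2_nat by auto
  have n1: "\<not> int p dvd 1" using p2 zdvd_imp_le[of "int p" 1] by auto
  have d: "int p dvd (b - a)" if "int p dvd x + a" "int p dvd x + b" for a b
  proof -
    have "int p dvd (x + b) - (x + a)" using that by (rule dvd_diff[rotated])
    then show ?thesis by simp
  qed
  have n23: "\<not> (int p dvd 2 \<and> int p dvd 3)"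
  proof
    assume h: "int p dvd 2 \<and> int p dvd 3"
    then have "int p dvd 3 - 2" using dvd_diff by blast
    then show False using n1 by simp
  qed
  show ?thesis
  proof (cases "int p dvd x")
    case True
    have a1: "\<not> int p dvd x + 1"
    proof
      assume h: "int p dvd x + 1"
      have "int p dvd 1 - 0" by (rule d) (use True h in simp_all)
      then show False using n1 by simp
    qed
    show ?thesis
    proof (cases "int p dvd x + 2")
      case True2: True
      have "\<not> int p dvd x + 3"
      proof
        assume "int p dvd x + 3"
        then have "int p dvd 3 - 2" by (rule d[OF True2])
        then show False using n1 by simp
      qed
      then show ?thesis using a1 by (intro exI[of _ 1] exI[of _ 3]) auto
    next
      case False
      then show ?thesis using a1 by (intro exI[of _ 1] exI[of _ 2]) auto
    qed
  next
    case False
    show ?thesis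
    proof (cases "int p dvd x + 1")
      case True
      have "\<not> int p dvd x + 2"
      proof
        assume h: "int p dvd x + 2"
        have "int p dvd 2 - 1" by (rule d) (use True h in simp_all)
        then show False using n1 by simp
      qed
      then show ?thesis using False by (intro exI[of _ 0] exI[of _ 2]) auto
    next
      case False2: False
      then show ?thesis using False by (intro exI[of _ 0] exI[of _ 1]) auto
    qed
  qed
qed


lemma BL:
  assumes p: "prime p" and z: "isU p z" and zw: "z dvd w" and x: "13 \<le> \<bar>x\<bar>"
    and h: "\<And>i. i \<in> {0,1,2,3} \<Longrightarrow> (x + i) dvd (w + i*z) \<and> pdvd (int p) (x+i) (w + i*z)"
  shows "w = x*z"
proof (rule ccontr)
  assume ne: "w \<noteq> x*z"
  obtain i i' where ii: "0 \<le> i" "i < i'" "i' \<le> 3" "\<not> int p dvd x + i" "\<not> int p dvd x + i'"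
    using two_coprime[OF p] by blast
  have iin: "i \<in> {0,1,2,3}" "i' \<in> {0,1,2,3}" using ii by auto
  have key: "\<exists>t. isU p t \<and> w - x*z = z*((t-1)*(x + j))" if j: "j \<in> {0,1,2,3}" "\<not> int p dvd x + j" for j
  proof -
    have n0: "x + j \<noteq> 0" using x j by auto
    obtain r where r: "isU p r" "w + j*z = r*(x+j)" using unit_quot[OF p n0] h[OF j(1)] by blast
    have "z dvd w + j*z" using zw by simp
    then have "z dvd r*(x+j)" using r(2) by simp
    then obtain t where t: "isU p t" "r = z*t" using unit_coprime[OF p z r(1)] j(2) by blast
    have "w - x*z = z*((t-1)*(x+j))" using r(2) t(2) by (simp add: algebra_simps)
    then show ?thesis using t by blast
  qed
  obtain t where t: "isU p t" "w - x*z = z*((t-1)*(x+i))" using key iin(1) ii(4) by blast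
  obtain t' where t': "isU p t'" "w - x*z = z*((t'-1)*(x+i'))" using key iin(2) ii(5) by blast
  have z0: "z \<noteq> 0" using isU_neq0 p z by blast
  have e: "(t - 1)*(x+i) = (t' - 1)*(x+i')" using t(2) t'(2) z0 by simp
  have t1: "t \<noteq> 1" using t(2) ne by auto
  have tt: "t \<noteq> t'"
  proof
    assume "t = t'"
    then have "(t - 1)*(i' - i) = 0" using e by (simp add: algebra_simps)
    then show False using t1 ii(2) by simp
  qed
  have e2: "(t - t')*(x + i) = (t' - 1)*(i' - i)" using e by (simp add: algebra_simps)
  have "\<bar>t - t'\<bar> * \<bar>x + i\<bar> = \<bar>t' - 1\<bar> * (i' - i)" using arg_cong[OF e2, of abs] ii(2)
    by (simp add: abs_mult)
  also have "\<dots> \<le> \<bar>t' - 1\<bar> * 3" using ii by (intro mult_left_mono) auto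
  also have "\<dots> \<le> (3*\<bar>t - t'\<bar>) * 3" using set_lemma[OF p t(1) t'(1) tt] by simp
  finally have "\<bar>t - t'\<bar> * \<bar>x + i\<bar> \<le> \<bar>t - t'\<bar> * 9" by simp
  then have "\<bar>x + i\<bar> \<le> 9" using tt by simp
  moreover have "10 \<le> \<bar>x + i\<bar>" using x ii(1) ii(2) ii(3) by linarith
  ultimately show False by simp
qed

fun num :: "nat \<Rightarrow> tm" where "num 0 = Zero" | "num (Suc n) = Plus (num n) One"
fun mul :: "nat \<Rightarrow> tm \<Rightarrow> tm" where "mul 0 t = Zero" | "mul (Suc n) t = Plus (mul n t) t"

lemma eval_num[simp]: "eval_tm (e::nat\<Rightarrow>int) (num n) = int n" by (induct n) auto
lemma eval_mul[simp]: "eval_tm (e::nat\<Rightarrow>int) (mul n t) = int n * eval_tm e t"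
  by (induct n) (auto simp: algebra_simps)
lemma fvt_num[simp]: "fvt (num n) = {}" by (induct n) auto
lemma fvt_mul: "fvt (mul n t) \<subseteq> fvt t" by (induct n) auto

definition shifts :: "nat list" where "shifts = [0,1,2,3,26,27,28,29]"

definition MD :: "tm \<Rightarrow> tm \<Rightarrow> tm \<Rightarrow> fm" where
 "MD x z w = conjs (Atom (Divides z w) # concat (map (\<lambda>c. [Atom (Divides (Plus x (num c)) (Plus w (mul c z))),
      Atom (RelR (Plus x (num c)) (Plus w (mul c z)))]) shifts))"

definition MDp :: "nat \<Rightarrow> int \<Rightarrow> int \<Rightarrow> int \<Rightarrow> bool" where
 "MDp p x z w \<longleftrightarrow> z dvd w \<and> (\<forall>c\<in>set shifts. (x + int c) dvd (w + int c * z) \<and> pdvd (int p) (x + int c) (w + int c * z))"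

lemma sat_MD: "sat_D p e (MD x z w) \<longleftrightarrow> MDp p (eval_tm e x) (eval_tm e z) (eval_tm e w)"
  unfolding sat_D_def MD_def MDp_def by auto

lemma syms_MD: "syms (MD x z w) = {SDvd, SR}"
  unfolding MD_def shifts_def by auto

lemma MDp_iff: assumes p: "prime p" and z: "isU p z" shows "MDp p x z w \<longleftrightarrow> w = x*z"
proof
  assume h: "MDp p x z w"
  then have zw: "z dvd w" unfolding MDp_def by blast
  have hc: "(x + int c) dvd (w + int c * z) \<and> pdvd (int p) (x + int c) (w + int c * z)" if "c \<in> set shifts" for c
    using h that unfolding MDp_def by blast
  show "w = x*z"
  proof (cases "13 \<le> \<bar>x\<bar>")
    case True
    show ?thesis
    proof (rule BL[OF p z zw True])
      fix i :: int assume i: "i \<in> {0,1,2,3}"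
      then have "nat i \<in> set shifts" "i = int (nat i)" unfolding shifts_def by auto
      then show "(x + i) dvd (w + i*z) \<and> pdvd (int p) (x+i) (w + i*z)" using hc[of "nat i"] by simp
    qed
  next
    case False
    have "w + 26*z = (x + 26)*z"
    proof (rule BL[OF p z])
      show "z dvd w + 26*z" using zw by simp
      show "13 \<le> \<bar>x + 26\<bar>" using False by linarith
      fix i :: int assume i: "i \<in> {0,1,2,3}"
      then have "nat (26 + i) \<in> set shifts" "26 + i = int (nat (26 + i))" unfolding shifts_def by auto
      then have "(x + (26 + i)) dvd (w + (26 + i)*z) \<and> pdvd (int p) (x+(26 + i)) (w + (26 + i)*z)"
        using hc[of "nat (26 + i)"] by simp
      then show "(x + 26 + i) dvd (w + 26*z + i*z) \<and> pdvd (int p) (x + 26 + i) (w + 26*z + i*z)"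
        by (simp add: algebra_simps)
    qed
    then show ?thesis by (simp add: algebra_simps)
  qed
next
  assume w: "w = x*z"
  obtain k where zk: "z = int p^k \<or> z = - (int p^k)" using z unfolding isU_def by blast
  have "pdvd (int p) (x + int c) (w + int c * z)" for c
    unfolding pdvd_def w using zk by (intro exI[of _ k]) (auto simp: algebra_simps)
  moreover have "(x + int c) dvd (w + int c * z)" for c
    unfolding w by (metis distrib_right dvd_triv_left)
  ultimately show "MDp p x z w" unfolding MDp_def w by simp
qed


lemma euler_pow: assumes p: "prime p" and n: "0 < n" and np: "\<not> p dvd n"
  shows "\<exists>j. 1 \<le> j \<and> int n dvd (int p ^ j - 1)"
proof -
  have "coprime p n" using p np by (simp add: prime_imp_coprime)
  then have "[p ^ totient n = 1] (mod n)" by (rule euler_theorem)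
  then have "n dvd p ^ totient n - 1" by (rule cong_to_1_nat)
  moreover have "1 \<le> p ^ totient n" using prime_gt_0_nat[OF p] by (simp add: Suc_le_eq)
  ultimately have "int n dvd int p ^ totient n - 1"
    by (metis int_dvd_int_iff of_nat_1 of_nat_diff of_nat_power)
  moreover have "1 \<le> totient n" using n by (simp add: Suc_le_eq)
  ultimately show ?thesis by blast
qed

lemma lemE: assumes p: "prime p" and L: "L \<noteq> 0"
  shows "\<exists>j e. 1 \<le> j \<and> 1 \<le> e \<and> L dvd (int p ^ j - 1) * int p ^ e"
proof -
  define n where "n = nat \<bar>L\<bar>"
  have n0: "n \<noteq> 0" using L n_def by simp
  have "\<not> is_unit p" using p not_prime_unit by blast
  then obtain n0 where d: "n = p ^ multiplicity p n * n0" "\<not> p dvd n0"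
    using multiplicity_decompose'[OF n0] by metis
  have "0 < n0" using d n0 by (cases "n0 = 0") auto
  then obtain j where j: "1 \<le> j" "int n0 dvd (int p ^ j - 1)" using euler_pow[OF p _ d(2)] by blast
  have "int p ^ multiplicity p n dvd int p ^ (multiplicity p n + 1)" by (simp add: le_imp_power_dvd)
  then have "int p ^ multiplicity p n * int n0 dvd int p ^ (multiplicity p n + 1) * (int p ^ j - 1)"
    using j(2) by (rule mult_dvd_mono)
  moreover have "int n = int p ^ multiplicity p n * int n0" using d(1) by (metis of_nat_mult of_nat_power)
  ultimately have "int n dvd (int p ^ j - 1) * int p ^ (multiplicity p n + 1)" by (simp add: mult.commute)
  moreover have "L dvd int n" unfolding n_def by simp
  ultimately show ?thesis using j(1) by (meson dvd_trans le_add2)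
qed

lemma small_mult2: fixes a k m :: int
  assumes "a = k*m" "\<bar>a\<bar> < \<bar>m\<bar>" shows "a = 0"
proof (rule ccontr)
  assume "a \<noteq> 0"
  then have "k \<noteq> 0" using assms by auto
  then have "1 \<le> \<bar>k\<bar>" by simp
  then have "\<bar>m\<bar> \<le> \<bar>k\<bar> * \<bar>m\<bar>" by (simp add: mult_le_cancel_right1)
  then show False using assms by (simp add: abs_mult)
qed

definition BD :: "nat \<Rightarrow> int \<Rightarrow> int \<Rightarrow> int \<Rightarrow> int \<Rightarrow> int \<Rightarrow> int \<Rightarrow> int \<Rightarrow> int \<Rightarrow> int \<Rightarrow> int \<Rightarrow> int \<Rightarrow> int \<Rightarrow> int \<Rightarrow> int \<Rightarrow> int \<Rightarrow> int \<Rightarrow> int \<Rightarrow> int \<Rightarrow> int \<Rightarrow> int \<Rightarrow> int \<Rightarrow> int \<Rightarrow> int \<Rightarrow> bool" where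
 "BD p x y w v u H G v2 u2 A K0 z zm1 W R U t V Q Qz xW V2 s \<longleftrightarrow>
   pdvd (int p) v 1 \<and> v \<notin> {-1,0,1} \<and> pdvd (int p) u 1 \<and> u \<notin> {-1,0,1}
   \<and> MDp p u v H \<and> G + u = H \<and> MDp p v v v2 \<and> MDp p u u u2 \<and> A + v + v = v2 + 1 \<and> MDp p A u2 K0
   \<and> pdvd (int p) z 1 \<and> z \<notin> {-1,0,1} \<and> zm1 + 1 = z \<and> (K0 + K0 + 1) dvd zm1
   \<and> (x = 0 \<or> x dvd G) \<and> (y = 0 \<or> y dvd G) \<and> (w = 0 \<or> w dvd G)
   \<and> pdvd (int p) W 1 \<and> MDp p R z U \<and> U + 1 = R + W \<and> R = y + V \<and> MDp p t z (V + t)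
   \<and> MDp p Q z Qz \<and> MDp p x W xW \<and> Qz + x = Q + xW \<and> Q = w + V2 \<and> MDp p s z (V2 + s)"

lemma BD_sound:
  assumes p: "prime p" and h: "BD p x y w v u H G v2 u2 A K0 z zm1 W R U t V Q Qz xW V2 s"
  shows "w = x*y"
proof -
  from h have hv: "pdvd (int p) v 1" "v \<notin> {-1,0,1}" and hu: "pdvd (int p) u 1" "u \<notin> {-1,0,1}"
    and hH: "MDp p u v H" and hG: "G + u = H" and hv2: "MDp p v v v2" and hu2: "MDp p u u u2"
    and hA: "A + v + v = v2 + 1" and hK: "MDp p A u2 K0" and hz: "pdvd (int p) z 1" "z \<notin> {-1,0,1}"
    and hzm: "zm1 + 1 = z" "(K0 + K0 + 1) dvd zm1"
    and bx: "x = 0 \<or> x dvd G" and by': "y = 0 \<or> y dvd G" and bw: "w = 0 \<or> w dvd G"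
    and hW: "pdvd (int p) W 1" and hR: "MDp p R z U" and e1: "U + 1 = R + W" and e2: "R = y + V"
    and ht: "MDp p t z (V + t)" and hQ: "MDp p Q z Qz" and hX: "MDp p x W xW" and e3: "Qz + x = Q + xW"
    and e4: "Q = w + V2" and hs: "MDp p s z (V2 + s)"
    unfolding BD_def by blast+
  have uv: "isU p v" "isU p u" "isU p z" "isU p W" using hv hu hz hW isU_pdvd[OF p] by auto
  have f1: "H = u*v" using MDp_iff[OF p uv(1)] hH by simp
  have f2: "v2 = v*v" using MDp_iff[OF p uv(1)] hv2 by simp
  have f3: "u2 = u*u" using MDp_iff[OF p uv(2)] hu2 by simp
  have u2U: "isU p u2" using f3 isU_mult uv(2) by blast
  have f4: "K0 = A*u2" using MDp_iff[OF p u2U] hK by simp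
  have f5: "U = R*z" using MDp_iff[OF p uv(3)] hR by simp
  have f6: "V + t = t*z" using MDp_iff[OF p uv(3)] ht by simp
  have f7: "Qz = Q*z" using MDp_iff[OF p uv(3)] hQ by simp
  have f8: "xW = x*W" using MDp_iff[OF p uv(4)] hX by simp
  have f9: "V2 + s = s*z" using MDp_iff[OF p uv(3)] hs by simp
  have Gdef: "G = u*(v - 1)" using hG f1 by (simp add: algebra_simps)
  have u0: "u \<noteq> 0" using isU_neq0[OF p uv(2)] .
  have G0: "G \<noteq> 0" using Gdef u0 hv(2) by auto
  have Adef: "A = (v - 1)*(v - 1)" using hA f2 by (simp add: algebra_simps)
  have K0G: "K0 = G*G" unfolding f4 f3 Adef Gdef by (simp add: algebra_simps)
  have zm0: "zm1 \<noteq> 0" using hzm(1) hz(2) by auto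
  have "\<bar>K0 + K0 + 1\<bar> \<le> \<bar>zm1\<bar>" using dvd_imp_le_int[OF zm0 hzm(2)] .
  then have Kb: "2*(G*G) + 1 \<le> \<bar>z - 1\<bar>" using K0G hzm(1) by (simp add: abs_if split: if_splits)
  have ax: "\<bar>x\<bar> \<le> \<bar>G\<bar>" using bx G0 dvd_imp_le_int by auto
  have ay: "\<bar>y\<bar> \<le> \<bar>G\<bar>" using by' G0 dvd_imp_le_int by auto
  have aw: "\<bar>w\<bar> \<le> \<bar>G\<bar>" using bw G0 dvd_imp_le_int by auto
  have z1: "z - 1 \<noteq> 0" using hz(2) by auto
  have "(z - 1)*(Q - x*R) = (Q*z + x) - x*(R*z + 1) - Q + x*R" by (simp add: algebra_simps)
  also have "\<dots> = (Q + x*W) - x*(R + W) - Q + x*R" using e1 e3 f5 f7 f8 by simp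
  also have "\<dots> = 0" by (simp add: algebra_simps)
  finally have QR: "Q = x*R" using z1 by simp
  have Vd: "V = t*(z-1)" using f6 by (simp add: algebra_simps)
  have V2d: "V2 = s*(z-1)" using f9 by (simp add: algebra_simps)
  have "w = x*(y + t*(z-1)) - s*(z-1)" using e4 QR e2 Vd V2d by simp
  then have key: "w - x*y = (x*t - s)*(z-1)" by (simp add: algebra_simps)
  have "\<bar>x\<bar>*\<bar>y\<bar> \<le> \<bar>G\<bar>*\<bar>G\<bar>" using ax ay by (intro mult_mono) auto
  then have "\<bar>x*y\<bar> \<le> \<bar>G\<bar>*\<bar>G\<bar>" by (simp only: abs_mult)
  moreover have "1 \<le> \<bar>G\<bar>" using G0 by simp
  then have "\<bar>G\<bar> * 1 \<le> \<bar>G\<bar>*\<bar>G\<bar>" by (intro mult_left_mono) auto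
  then have "\<bar>G\<bar> \<le> \<bar>G\<bar>*\<bar>G\<bar>" by (simp only: mult_1_right)
  moreover have "\<bar>G\<bar>*\<bar>G\<bar> = G*G" by (simp add: abs_mult_self_eq)
  ultimately have "\<bar>w - x*y\<bar> < \<bar>z - 1\<bar>" using aw Kb by linarith
  then have "w - x*y = 0" using key small_mult2 by blast
  then show ?thesis by simp
qed

lemma BD_complete:
  assumes p: "prime p"
  shows "\<exists>v u H G v2 u2 A K0 z zm1 W R U t V Q Qz xW V2 s. BD p x y (x*y) v u H G v2 u2 A K0 z zm1 W R U t V Q Qz xW V2 s"
proof -
  have p2: "2 \<le> int p" using prime_ge_2_nat[OF p] by simp
  define L where "L = (if x = 0 then 1 else x) * (if y = 0 then 1 else y) * (if x*y = 0 then 1 else x*y)"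
  have L0: "L \<noteq> 0" unfolding L_def by auto
  obtain j e where je: "1 \<le> j" "1 \<le> e" "L dvd (int p^j - 1) * int p^e" using lemE[OF p L0] by blast
  define v where "v = int p^j"
  define u where "u = int p^e"
  define G where "G = u*(v - 1)"
  have LG: "L dvd G" using je(3) unfolding G_def u_def v_def by (simp add: mult.commute)
  have "x dvd L" if "x \<noteq> 0" using that unfolding L_def by (simp add: mult.assoc)
  then have bx: "x = 0 \<or> x dvd G" using LG dvd_trans by blast
  have "y dvd L" if "y \<noteq> 0" using that unfolding L_def by (simp add: mult.commute mult.left_commute)
  then have by': "y = 0 \<or> y dvd G" using LG dvd_trans by blast
  have "x*y dvd L" if "x*y \<noteq> 0" using that unfolding L_def by simp
  then have bw: "x*y = 0 \<or> x*y dvd G" using LG dvd_trans by blast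
  have vp: "int p \<le> v" unfolding v_def using je(1) p2 by (intro self_le_power) auto
  have up: "int p \<le> u" unfolding u_def using je(2) p2 by (intro self_le_power) auto
  have vU: "isU p v" "isU p u" unfolding isU_def v_def u_def by auto
  have u2U: "isU p (u*u)" using vU isU_mult by blast
  define K where "K = 2*(G*G) + 1"
  have pG: "int p dvd G" unfolding G_def u_def using je(2) by (simp add: dvd_power)
  have npK: "\<not> int p dvd K"
  proof
    assume "int p dvd K"
    moreover have "int p dvd 2*(G*G)" using pG by simp
    ultimately have "int p dvd 1" unfolding K_def by (simp add: dvd_add_right_iff)
    then show False using p2 zdvd_imp_le[of "int p" 1] by auto
  qed
  have K0: "0 < K" unfolding K_def by (simp add: add_pos_nonneg)
  have nK: "\<not> p dvd nat K" using npK K0 by (metis int_dvd_int_iff int_nat_eq less_le)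
  have "0 < nat K" using K0 by simp
  then obtain jz where jz: "1 \<le> jz" "int (nat K) dvd (int p ^ jz - 1)" using euler_pow[OF p _ nK] by blast
  define z where "z = int p^jz"
  have zK: "K dvd z - 1" using jz(2) K0 unfolding z_def by simp
  have zp: "int p \<le> z" unfolding z_def using jz(1) p2 by (intro self_le_power) auto
  have zU: "isU p z" unfolding isU_def z_def by auto
  define nn where "nn = nat (y + \<bar>y\<bar>*(z - 1))"
  have "\<bar>y\<bar> \<le> \<bar>y\<bar>*(z - 1)" using zp p2 by (simp add: mult_le_cancel_left1)
  then have nn: "int nn = y + \<bar>y\<bar>*(z - 1)" unfolding nn_def by simp
  define W where "W = z^nn"
  have WU: "isU p W" unfolding isU_def W_def z_def by (auto simp flip: power_mult)
  define R where "R = (\<Sum>i<nn. z^i)"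
  have gR: "R*(z - 1) = W - 1" unfolding R_def W_def using power_diff_1_eq[of z nn] by (simp add: mult.commute)
  have "(z - 1) dvd (R - int nn)"
  proof -
    have "R - int nn = (\<Sum>i<nn. (z ^ i - 1))" unfolding R_def by (simp add: sum_subtractf)
    moreover have "\<forall>i. (z - 1) dvd (z ^ i - 1)"
    proof
      fix i show "(z - 1) dvd (z ^ i - 1)" unfolding power_diff_1_eq[of z i] by simp
    qed
    ultimately show ?thesis by (simp add: dvd_sum)
  qed
  then have "(z - 1) dvd (R - int nn) + \<bar>y\<bar>*(z - 1)" by (rule dvd_add) simp
  moreover have "R - y = (R - int nn) + \<bar>y\<bar>*(z - 1)" using nn by simp
  ultimately have "(z - 1) dvd (R - y)" by (simp only:)
  define t where "t = (R - y) div (z - 1)"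
  define V where "V = R - y"
  have Vt: "V = t*(z - 1)" unfolding V_def t_def using \<open>(z - 1) dvd (R - y)\<close> by simp
  have "BD p x y (x*y) v u (u*v) G (v*v) (u*u) ((v-1)*(v-1)) (G*G) z (z - 1) W R (R*z) t V (x*R) (x*R*z) (x*W) (x*V) (x*t)"
    unfolding BD_def
  proof (intro conjI)
    show "pdvd (int p) v 1" "pdvd (int p) u 1" "pdvd (int p) z 1" "pdvd (int p) W 1"
      using isU_pdvd[OF p] vU zU WU by auto
    show "v \<notin> {-1,0,1}" "u \<notin> {-1,0,1}" "z \<notin> {-1,0,1}" using vp up zp p2 by auto
    show "MDp p u v (u*v)" "MDp p v v (v*v)" "MDp p u u (u*u)" using MDp_iff[OF p] vU by auto
    show "G + u = u*v" unfolding G_def by (simp add: algebra_simps)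
    show "(v-1)*(v-1) + v + v = v*v + 1" by (simp add: algebra_simps)
    show "MDp p ((v-1)*(v-1)) (u*u) (G*G)" using MDp_iff[OF p u2U] unfolding G_def by (simp add: algebra_simps)
    show "z - 1 + 1 = z" by simp
    show "(G*G + G*G + 1) dvd (z - 1)" using zK unfolding K_def by (simp add: algebra_simps)
    show "x = 0 \<or> x dvd G" by (rule bx)
    show "y = 0 \<or> y dvd G" by (rule by')
    show "x*y = 0 \<or> x*y dvd G" by (rule bw)
    show "MDp p R z (R*z)" using MDp_iff[OF p zU] by simp
    show "R*z + 1 = R + W" using gR by (simp add: algebra_simps)
    show "R = y + V" unfolding V_def by simp
    show "MDp p t z (V + t)" using MDp_iff[OF p zU] Vt by (simp add: algebra_simps)
    show "MDp p (x*R) z (x*R*z)" using MDp_iff[OF p zU] by simp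
    show "MDp p x W (x*W)" using MDp_iff[OF p WU] by simp
    show "x*R*z + x = x*R + x*W"
    proof -
      have "x*(R*(z-1)) = x*(W - 1)" using gR by simp
      then show ?thesis by (simp add: algebra_simps)
    qed
    show "x*R = x*y + x*V" unfolding V_def by (simp add: algebra_simps)
    have "x*V + x*t = x*t*z" unfolding Vt by (simp add: algebra_simps)
    then show "MDp p (x*t) z (x*V + x*t)" using MDp_iff[OF p zU] by simp
  qed
  then show ?thesis by (intro exI)
qed


definition bodyD :: fm where
 "bodyD = (let x = Var 0; y = Var 1; w = Var 2; v = Var 3; u = Var 4; H = Var 5; G = Var 6; v2 = Var 7; u2 = Var 8;
   A = Var 9; K0 = Var 10; z = Var 11; zm1 = Var 12; W = Var 13; R = Var 14; U = Var 15; t = Var 16; V = Var 17;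
   Q = Var 18; Qz = Var 19; xW = Var 20; V2 = Var 21; s = Var 22 in
  conjs [Atom (RelR v One), Atom (PredT v), Atom (RelR u One), Atom (PredT u),
   MD u v H, Atom (Eq (Plus G u) H), MD v v v2, MD u u u2, Atom (Eq (Plus (Plus A v) v) (Plus v2 One)), MD A u2 K0,
   Atom (RelR z One), Atom (PredT z), Atom (Eq (Plus zm1 One) z), Atom (Divides (Plus (Plus K0 K0) One) zm1),
   Disj (Atom (Eq x Zero)) (Atom (Divides x G)), Disj (Atom (Eq y Zero)) (Atom (Divides y G)),
   Disj (Atom (Eq w Zero)) (Atom (Divides w G)),
   Atom (RelR W One), MD R z U, Atom (Eq (Plus U One) (Plus R W)), Atom (Eq R (Plus y V)), MD t z (Plus V t),
   MD Q z Qz, MD x W xW, Atom (Eq (Plus Qz x) (Plus Q xW)), Atom (Eq Q (Plus w V2)), MD s z (Plus V2 s)])"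

definition muD :: fm where
 "muD = Ex 3 (Ex 4 (Ex 5 (Ex 6 (Ex 7 (Ex 8 (Ex 9 (Ex 10 (Ex 11 (Ex 12 (Ex 13 (Ex 14 (Ex 15 (Ex 16 (Ex 17 (Ex 18 (Ex 19 (Ex 20 (Ex 21 (Ex 22 ( bodyD))))))))))))))))))))"

lemma sat_MD': "sat (pdvd (int p)) P (dvd) T e (MD x z w) \<longleftrightarrow> MDp p (eval_tm e x) (eval_tm e z) (eval_tm e w)"
  unfolding MD_def MDp_def by auto

lemma sat_bodyD: "sat_D p (e(3:=v, 4:=u, 5:=H, 6:=G, 7:=v2, 8:=u2, 9:=A, 10:=K0, 11:=z, 12:=zm1, 13:=W, 14:=R, 15:=U, 16:=t, 17:=V, 18:=Q, 19:=Qz, 20:=xW, 21:=V2, 22:=s)) bodyD \<longleftrightarrow> BD p (e 0) (e 1) (e 2) v u H G v2 u2 A K0 z zm1 W R U t V Q Qz xW V2 s"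
  unfolding sat_D_def bodyD_def BD_def Let_def by (simp add: sat_MD')

lemma sat_muD: "sat_D p e muD \<longleftrightarrow> (\<exists>v u H G v2 u2 A K0 z zm1 W R U t V Q Qz xW V2 s. BD p (e 0) (e 1) (e 2) v u H G v2 u2 A K0 z zm1 W R U t V Q Qz xW V2 s)"
  unfolding muD_def sat_D_def by (simp only: sat.simps sat_bodyD[unfolded sat_D_def])

lemma muD_correct: assumes p: "prime p" shows "sat_D p e muD \<longleftrightarrow> e 2 = e 0 * e 1"
proof
  assume "sat_D p e muD"
  then obtain v u H G v2 u2 A K0 z zm1 W R U t V Q Qz xW V2 s where "BD p (e 0) (e 1) (e 2) v u H G v2 u2 A K0 z zm1 W R U t V Q Qz xW V2 s"
    unfolding sat_muD by blast
  then show "e 2 = e 0 * e 1" by (rule BD_sound[OF p])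
next
  assume eq: "e 2 = e 0 * e 1"
  obtain v u H G v2 u2 A K0 z zm1 W R U t V Q Qz xW V2 s where bd: "BD p (e 0) (e 1) (e 0 * e 1) v u H G v2 u2 A K0 z zm1 W R U t V Q Qz xW V2 s"
    using BD_complete[OF p, of "e 0" "e 1"] by (elim exE) blast
  show "sat_D p e muD" unfolding sat_muD eq apply (intro exI) by (rule bd)
qed

lemma syms_muD: "syms muD \<subseteq> {SDvd, SR, ST}"
  unfolding muD_def bodyD_def Let_def by (simp only: syms.simps syms_conjs syms_MD atom_syms.simps list.set) (auto simp: syms_MD)


theorem theorem1p13:
  shows "(\<exists>\<mu>. syms \<mu> \<subseteq> {SR} \<and>
           (\<forall>p::nat. prime p \<longrightarrow> (\<forall>e. sat_N p e \<mu> \<longleftrightarrow> e 2 = e 0 * e 1)))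
       \<and> (\<exists>\<mu>. syms \<mu> \<subseteq> {SPos, SR} \<and>
           (\<forall>p::nat. prime p \<longrightarrow> (\<forall>e. sat_Z p e \<mu> \<longleftrightarrow> e 2 = e 0 * e 1)))
       \<and> (\<exists>\<mu>. syms \<mu> \<subseteq> {SDvd, SR, ST} \<and>
           (\<forall>p::nat. prime p \<longrightarrow> (\<forall>e. sat_D p e \<mu> \<longleftrightarrow> e 2 = e 0 * e 1)))"
proof (intro conjI)
  show "\<exists>\<mu>. syms \<mu> \<subseteq> {SR} \<and>
           (\<forall>p::nat. prime p \<longrightarrow> (\<forall>e. sat_N p e \<mu> \<longleftrightarrow> e 2 = e 0 * e 1))"
    using syms_muN sat_N_muN by blast
  show "\<exists>\<mu>. syms \<mu> \<subseteq> {SPos, SR} \<and>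
           (\<forall>p::nat. prime p \<longrightarrow> (\<forall>e. sat_Z p e \<mu> \<longleftrightarrow> e 2 = e 0 * e 1))"
    using syms_muZ muZ_correct by blast
  show "\<exists>\<mu>. syms \<mu> \<subseteq> {SDvd, SR, ST} \<and>
           (\<forall>p::nat. prime p \<longrightarrow> (\<forall>e. sat_D p e \<mu> \<longleftrightarrow> e 2 = e 0 * e 1))"
    using syms_muD muD_correct by blast
qed

end
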